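(* Let $N\ge 3$ be an integer, let $\Delta\theta^*=2\pi/N$, and let $P\neq 0$ be a real constant. Let $(\theta_k)_{k\ge1}$ and $(\omega_k)_{k\ge1}$ be real sequences with $\omega_k>0$ for all $k$, satisfying for every $k\ge 1$ $$\theta_{k+1}=\theta_k+\Delta\theta^*,\qquad \omega_{k+1}-\omega_k=P\sin\theta_k\left[\frac{1}{\omega_k}+\frac{1}{\omega_{k+1}}\right],$$ and the assumption $\omega_k^2>|P|$ for every $k\ge1$. If $\theta_1=\Delta\theta^*/2$, then the solution is periodic with period $N$: for every $k\ge1$, $\theta_{k+N}=\theta_k+2\pi$ and $\omega_{k+N}=\omega_k$.
   Context: This is the "discrete zero dynamics" of a devil-stick with parameter $\phi=\pm\pi/2$; in the paper $P=\frac{g(\Delta\theta^* )^2}{2R\sin(\Delta\theta^* )}$ if $\phi=-\pi/2$ and $P=-\frac{g(\Delta\theta^* )^2}{2R\sin(\Delta\theta^* )}$ if $\phi=\pi/2$, where $g>0$ and $R>0$ are constants. The hypothesis $\omega_k^2>|P|$ for all $k$ is the paper's Assumption 1. *)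

theory Defs
  imports Complex_Main
begin

end

theory Submission
  imports Defs
begin

lemma uniq2:
  fixes s a x y :: real
  assumes "x > 0" "y > 0" "x^2 > Q" "y^2 > Q" "\<bar>s\<bar> \<le> Q"
    and "x - a = s * (1/a + 1/x)" "y - a = s * (1/a + 1/y)"
  shows "x = y"
proof -
  have e: "x - y = s * (1/x - 1/y)" using assms(6,7) by (simp add: algebra_simps)
  have "(x*y)^2 > Q^2"
  proof -
    have Q0: "Q \<ge> 0" using assms(5) by linarith
    have "x^2 * y^2 > Q * Q"
      using assms(3,4) Q0 by (smt (verit) mult_strict_mono zero_le_power2)
    thus ?thesis by (simp add: power2_eq_square mult_ac)
  qed
  hence "x*y > Q" using assms(1,2) by (smt (verit) power_mono mult_pos_pos)
  hence xy: "x*y > \<bar>s\<bar>" using assms(5) by linarith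
  have "(x - y) * (x*y) = s * (y - x)" using e assms(1,2) by (simp add: field_simps)
  hence "(x - y) * (x*y + s) = 0" by (simp add: algebra_simps)
  moreover have "x*y + s > 0" using xy by linarith
  ultimately show ?thesis by simp
qed

lemma uniq1:
  fixes s a x y :: real
  assumes "x > 0" "y > 0" "x^2 > Q" "y^2 > Q" "\<bar>s\<bar> \<le> Q"
    and "a - x = s * (1/x + 1/a)" "a - y = s * (1/y + 1/a)"
  shows "x = y"
  using uniq2[of x y Q "-s" a] assms by (simp add: algebra_simps)

theorem lemma2:
  fixes N :: nat and P :: real and \<theta> \<omega> :: "nat \<Rightarrow> real"
  assumes hN: "N \<ge> 3"
    and hP: "P \<noteq> 0"
    and hpos: "\<And>k. k \<ge> 1 \<Longrightarrow> \<omega> k > 0"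
    and htheta: "\<And>k. k \<ge> 1 \<Longrightarrow> \<theta> (k + 1) = \<theta> k + 2 * pi / real N"
    and homega: "\<And>k. k \<ge> 1 \<Longrightarrow>
        \<omega> (k + 1) - \<omega> k = P * sin (\<theta> k) * (1 / \<omega> k + 1 / \<omega> (k + 1))"
    and hassm: "\<And>k. k \<ge> 1 \<Longrightarrow> (\<omega> k)\<^sup>2 > \<bar>P\<bar>"
    and hinit: "\<theta> 1 = (2 * pi / real N) / 2"
  shows "\<forall>k\<ge>1. \<theta> (k + N) = \<theta> k + 2 * pi \<and> \<omega> (k + N) = \<omega> k"
proof -
  have Npos: "real N > 0" using hN by simp
  have th0: "\<theta> (k+1) = (2 * real k + 1) * pi / real N" for k
  proof (induction k)
    case 0 thus ?case using hinit by simp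
  next
    case (Suc k)
    have "\<theta> (Suc k + 1) = \<theta> (k+1) + 2*pi/real N" using htheta[of "k+1"] by simp
    thus ?case using Suc Npos by (simp add: field_simps)
  qed
  have th: "\<theta> k = (2 * real k - 1) * pi / real N" if "k \<ge> 1" for k
    using th0[of "k - 1"] that by (simp add: of_nat_diff algebra_simps)
  have thN: "\<theta> (k + N) = \<theta> k + 2*pi" if "k \<ge> 1" for k
  proof -
    have A: "\<theta> (k + N) = (2 * real (k+N) - 1) * pi / real N" using th[of "k+N"] that by simp
    have B: "\<theta> k = (2 * real k - 1) * pi / real N" using th[of k] that by simp
    show ?thesis unfolding A B using Npos by (simp add: field_simps)
  qed
  define s where "s k = P * sin (\<theta> k)" for k
  have sbd: "\<bar>s k\<bar> \<le> \<bar>P\<bar>" for k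
    unfolding s_def by (simp add: abs_mult mult_left_le)
  have sN: "s (k + N) = s k" if "k \<ge> 1" for k
    unfolding s_def using thN[OF that] by (simp add: sin_periodic)
  have srev: "s (N + 1 - k) = - s k" if "k \<ge> 1" "k \<le> N" for k
  proof -
    have A: "\<theta> (N + 1 - k) = (2 * (real N + 1 - real k) - 1) * pi / real N"
      using th[of "N+1-k"] that by (simp add: of_nat_diff)
    have B: "\<theta> k = (2 * real k - 1) * pi / real N" using th[of k] that by simp
    have "\<theta> (N + 1 - k) = 2*pi - \<theta> k" unfolding A B using Npos by (simp add: field_simps)
    thus ?thesis unfolding s_def by (simp add: sin_diff)
  qed
  have R: "\<omega> (k + 1) - \<omega> k = s k * (1 / \<omega> k + 1 / \<omega> (k + 1))" if "k \<ge> 1" for k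
    using homega[OF that] unfolding s_def .
  define u where "u j = \<omega> (N + 2 - j)" for j
  have Ru: "u (j+1) - u j = s j * (1 / u j + 1 / u (j + 1))" if "j \<ge> 1" "j \<le> N" for j
  proof -
    have "\<omega> (N+1-j+1) - \<omega> (N+1-j) = s (N+1-j) * (1 / \<omega> (N+1-j) + 1 / \<omega> (N+1-j+1))"
      using R[of "N+1-j"] that by simp
    moreover have "N+1-j+1 = N+2-j" "N + 2 - (j+1) = N+1-j" using that by auto
    ultimately show ?thesis unfolding u_def using srev[OF that] by (simp add: algebra_simps)
  qed
  define m where "m = N div 2 + 1"
  have m1: "m \<ge> 1" "m \<le> N" using hN unfolding m_def by auto
  have mid: "u m = \<omega> m"
  proof (cases "even N")
    case True
    then obtain n where n: "N = 2*n" by auto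
    thus ?thesis unfolding u_def m_def by simp
  next
    case False
    then obtain n where n: "N = 2*n+1" using oddE by blast
    have A: "\<theta> (n+1) = (2 * real n + 1) * pi / real N" using th0[of n] by simp
    have "real N = 2 * real n + 1" using n by simp
    hence "\<theta> (n+1) = pi" unfolding A by simp
    hence "s (n+1) = 0" unfolding s_def by simp
    hence "\<omega> (n+2) = \<omega> (n+1)" using R[of "n+1"] by (simp add: numeral_2_eq_2)
    moreover have "N + 2 - (n+1) = n + 2" using n by simp
    ultimately show ?thesis unfolding u_def m_def using n by simp
  qed
  have bk: "u (m - i) = \<omega> (m - i)" if "i \<le> m - 1" for i
    using that
  proof (induction i)
    case 0 thus ?case using mid by simp
  next
    case (Suc i)
    define j where "j = m - Suc i"
    have j1: "j \<ge> 1" "j \<le> N" "j + 1 = m - i" using Suc.prems m1 unfolding j_def by auto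
    have eq: "u (j+1) = \<omega> (j+1)" using Suc j1 by simp
    have uj: "u j > 0" "(u j)^2 > \<bar>P\<bar>" unfolding u_def using j1 hpos hassm by auto
    have "u j = \<omega> j"
      using uniq1[of "u j" "\<omega> j" "\<bar>P\<bar>" "s j" "\<omega> (j+1)"] uj hpos[of j] hassm[of j] j1
        sbd[of j] Ru[OF j1(1,2)] R[OF j1(1)] eq by (simp add: algebra_simps)
    thus ?case unfolding j_def by simp
  qed
  have w1: "\<omega> (1 + N) = \<omega> 1" using bk[of "m - 1"] m1 unfolding u_def by simp
  have per: "\<omega> (k + N) = \<omega> k" if "k \<ge> 1" for k
    using that
  proof (induction k rule: dec_induct)
    case base thus ?case using w1 .
  next
    case (step k)
    have a: "\<omega> (k + N + 1) - \<omega> k = s k * (1 / \<omega> k + 1 / \<omega> (k + N + 1))"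
      using R[of "k+N"] step sN[of k] by simp
    show ?case
      using uniq2[of "\<omega> (k+N+1)" "\<omega> (k+1)" "\<bar>P\<bar>" "s k" "\<omega> k"] a R[of k] step
        hpos[of "k+N+1"] hpos[of "k+1"] hassm[of "k+N+1"] hassm[of "k+1"] sbd[of k]
      by simp
  qed
  show ?thesis using thN per by simp
qed

end
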